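(* Assume that the kinetic system $(\Omega, \mathcal R, \mathcal K)$ satisfies the detailed balance property. Let $U \subset \Omega$ and $V := \Omega \setminus U$. Consider the reduced kinetic system $(V, \mathcal R_V, \mathcal K[n_U])$ where $n_U := \{n_s\}_{s \in U}$ with $n_s > 0$ for every $s \in U$. 1. If $U \cap \mathcal D(\mathcal C_V) = \emptyset$, then $(V, \mathcal R_V, \mathcal K[n_U])$ satisfies the detailed balance property. 2. If $U \cap \mathcal D(\mathcal C_V) \neq \emptyset$ and $n_s = e^{-E(s)}$ for all $s \in U \cap \mathcal D(\mathcal C_V)$, for an energy $E \in \mathbb R^N$ of the kinetic system $(\Omega, \mathcal R, \mathcal K)$, then $(V, \mathcal R_V, \mathcal K[n_U])$ satisfies the detailed balance property.
   Context: A chemical network $(\Omega,\mathcal R)$ has substances $\Omega=\{1,\dots,N\}$ and reactions $\mathcal R\subset \mathbb Z^N\setminus\{0\}$; for $R\in\mathcal R$, $I(R)=\{i: R(i)<0\}$, $F(R)=\{i:R(i)>0\}$. It is bidirectional if $R\in\mathcal R$ implies $-R\in\mathcal R$; $\mathcal R_s$ contains one representative of each pair $\{R,-R\}$, and $\textbf{R}\in\mathbb Z^{N\times|\mathcal R_s|}$ is the matrix whose columns are the reactions in $\mathcal R_s$. The space of cycles is $\mathcal C=\ker \textbf{R}$. A kinetic system $(\Omega,\mathcal R,\mathcal K)$ is a bidirectional network with rates $K_R=\mathcal K(R)>0$ (mass action kinetics). It satisfies the detailed balance property if there is $\overline N\in\mathbb R_+^N$ with $K_R\prod_{i\in I(R)}\overline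 N_i^{-R(i)}=K_{-R}\prod_{i\in F(R)}\overline N_i^{R(i)}$ for all $R\in\mathcal R_s$. An energy of $(\Omega,\mathcal R,\mathcal K)$ is any solution $E\in\mathbb R^N$ of $\textbf{R}^T E=w$, where $w(i)=\log(K_{-R_i}/K_{R_i})$ for the columns $R_i$ of $\textbf{R}$. Reduction: for $U\subset\Omega$ nonempty, $V=\Omega\setminus U$, $\pi_V$ denotes projection onto the coordinates in $V$; the reduced reactions are $\mathcal R_V=\{\pi_V \overline R\neq 0:\overline R\in\mathcal R\}$, with reaction matrix $\textbf{R}_V$ and space of cycles $\mathcal C_V=\ker\textbf{R}_V$; the reduced rates are $\mathcal K[n_U](R)=\sum_{\overline R\in\mathcal R:\ \pi_V\overline R=R} K_{\overline R}\prod_{s\in U\cap I(\overline R)} n_s^{-\overline R(s)}$. Finally $\mathcal D(\mathcal C_V):=\{i\in\Omega: \exists R\in\mathcal R \text{ such that } \pi_V R \text{ belongs to a cycle in } \mathcal C_V \text{ and } R(i)\neq 0\}$. *)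

theory Defs
  imports Main "HOL-Analysis.Analysis"
begin

text \<open>Substances form a finite set \<Omega> of an arbitrary type 's. A reaction is a
  vector in \<int>^\<Omega>, represented as a function 's \<Rightarrow> int vanishing outside \<Omega>.\<close>

type_synonym 's reaction = "'s \<Rightarrow> int"

definition rneg :: "'s reaction \<Rightarrow> 's reaction" where
  "rneg R = (\<lambda>i. - R i)"

definition Ireact :: "'s reaction \<Rightarrow> 's set" where
  "Ireact R = {i. R i < 0}"

definition Freact :: "'s reaction \<Rightarrow> 's set" where
  "Freact R = {i. R i > 0}"

definition chemical_network :: "'s set \<Rightarrow> 's reaction set \<Rightarrow> bool" where
  "chemical_network \<Omega> \<R> \<longleftrightarrow> finite \<Omega> \<and> finite \<R> \<and>
     (\<forall>R\<in>\<R>. R \<noteq> (\<lambda>_. 0) \<and> (\<forall>i. i \<notin> \<Omega> \<longrightarrow> R i = 0))"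

definition bidirectional :: "'s reaction set \<Rightarrow> bool" where
  "bidirectional \<R> \<longleftrightarrow> (\<forall>R\<in>\<R>. rneg R \<in> \<R>)"

definition kinetic_system :: "'s set \<Rightarrow> 's reaction set \<Rightarrow> ('s reaction \<Rightarrow> real) \<Rightarrow> bool" where
  "kinetic_system \<Omega> \<R> K \<longleftrightarrow> chemical_network \<Omega> \<R> \<and> bidirectional \<R> \<and> (\<forall>R\<in>\<R>. K R > 0)"

text \<open>The set \<R>_s: one representative of each pair {R, -R} (a fixed choice).\<close>
definition reps :: "'s reaction set \<Rightarrow> 's reaction set" where
  "reps \<R> = (SOME S. S \<subseteq> \<R> \<and> (\<forall>R\<in>\<R>. (R \<in> S) \<noteq> (rneg R \<in> S)))"

definition detailed_balance :: "'s set \<Rightarrow> 's reaction set \<Rightarrow> ('s reaction \<Rightarrow> real) \<Rightarrow> bool" where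
  "detailed_balance \<Omega> \<R> K \<longleftrightarrow>
     (\<exists>Nb :: 's \<Rightarrow> real. (\<forall>i\<in>\<Omega>. Nb i > 0) \<and>
        (\<forall>R\<in>reps \<R>.
           K R * (\<Prod>i\<in>Ireact R. Nb i ^ nat (- R i)) =
           K (rneg R) * (\<Prod>i\<in>Freact R. Nb i ^ nat (R i))))"

text \<open>Space of cycles \<C> = ker \<R> (real coefficients indexed by the columns \<R>_s).\<close>
definition cycles :: "'s reaction set \<Rightarrow> ('s reaction \<Rightarrow> real) set" where
  "cycles \<R> = {c. (\<forall>R. R \<notin> reps \<R> \<longrightarrow> c R = 0) \<and>
                   (\<forall>i. (\<Sum>R\<in>reps \<R>. c R * of_int (R i)) = 0)}"

definition energy :: "'s set \<Rightarrow> 's reaction set \<Rightarrow> ('s reaction \<Rightarrow> real) \<Rightarrow> ('s \<Rightarrow> real) \<Rightarrow> bool" where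
  "energy \<Omega> \<R> K E \<longleftrightarrow>
     (\<forall>R\<in>reps \<R>. (\<Sum>i\<in>\<Omega>. of_int (R i) * E i) = ln (K (rneg R) / K R))"

definition proj :: "'s set \<Rightarrow> 's reaction \<Rightarrow> 's reaction" where
  "proj V R = (\<lambda>i. if i \<in> V then R i else 0)"

definition reduced_reactions :: "'s set \<Rightarrow> 's reaction set \<Rightarrow> 's reaction set" where
  "reduced_reactions V \<R> = {proj V Rb | Rb. Rb \<in> \<R> \<and> proj V Rb \<noteq> (\<lambda>_. 0)}"

definition reduced_rates ::
  "'s set \<Rightarrow> 's set \<Rightarrow> 's reaction set \<Rightarrow> ('s reaction \<Rightarrow> real) \<Rightarrow> ('s \<Rightarrow> real) \<Rightarrow> 's reaction \<Rightarrow> real" where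
  "reduced_rates U V \<R> K n R =
     (\<Sum>Rb\<in>{Rb\<in>\<R>. proj V Rb = R}. K Rb * (\<Prod>s\<in>U \<inter> Ireact Rb. n s ^ nat (- Rb s)))"

text \<open>\<D>(\<C>_V): substances taking part in a reaction whose projection belongs to a cycle
  of the reduced network (i.e. has nonzero coefficient in some cycle).\<close>
definition Dcyc :: "'s set \<Rightarrow> 's set \<Rightarrow> 's reaction set \<Rightarrow> 's set" where
  "Dcyc \<Omega> V \<R> = {i\<in>\<Omega>. \<exists>R\<in>\<R>. \<exists>c\<in>cycles (reduced_reactions V \<R>).
        (c (proj V R) \<noteq> 0 \<or> c (rneg (proj V R)) \<noteq> 0) \<and> R i \<noteq> 0}"

end

theory Submission imports Defs "HOL-Library.Function_Algebras" begin

lemma sum_fun_apply: "(\<Sum>v\<in>B. f v) (i::'s) = (\<Sum>v\<in>B. (f v) i :: real)"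
  by (induct B rule: infinite_finite_induct) auto

lemma LA:
  fixes S :: "('s \<Rightarrow> int) set" and V :: "'s set" and t :: "('s \<Rightarrow> int) \<Rightarrow> real"
  assumes fS: "finite S" and fV: "finite V"
    and supp: "\<forall>R\<in>S. \<forall>i. i \<notin> V \<longrightarrow> R i = 0"
    and cyc: "\<And>c. (\<forall>i. (\<Sum>R\<in>S. c R * of_int (R i)) = 0) \<Longrightarrow> (\<Sum>R\<in>S. c R * t R) = 0"
  shows "\<exists>x. \<forall>R\<in>S. (\<Sum>i\<in>V. of_int (R i) * x i) = t R"
proof -
  define s1 :: "real \<Rightarrow> ('s \<Rightarrow> real) \<Rightarrow> ('s \<Rightarrow> real)" where "s1 = (\<lambda>c f i. c * f i)"
  interpret vs1: vector_space s1
    by unfold_locales (auto simp: s1_def algebra_simps)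
  interpret vs2: vector_space "(*) :: real \<Rightarrow> real \<Rightarrow> real"
    by unfold_locales (auto simp: algebra_simps)
  interpret vp: vector_space_pair s1 "(*) :: real \<Rightarrow> real \<Rightarrow> real" ..
  define \<phi> :: "('s \<Rightarrow> int) \<Rightarrow> ('s \<Rightarrow> real)" where "\<phi> = (\<lambda>R i. of_int (R i))"
  have injphi: "inj \<phi>" unfolding \<phi>_def inj_def by (auto simp: fun_eq_iff)
  obtain B where B: "B \<subseteq> \<phi> ` S" "vs1.independent B" "\<phi> ` S \<subseteq> vs1.span B"
    using vs1.maximal_independent_subset by blast
  define S0 where "S0 = {R\<in>S. \<phi> R \<in> B}"
  have BS0: "B = \<phi> ` S0" using B(1) unfolding S0_def by auto
  have fS0: "finite S0" using fS S0_def by auto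
  have injS0: "inj_on \<phi> S0" using injphi by (simp add: inj_on_def inj_def)
  obtain g where g: "Vector_Spaces.linear s1 (*) g" "\<forall>v\<in>B. g v = t (inv \<phi> v)"
    using vp.linear_independent_extend[OF B(2), of "\<lambda>v. t (inv \<phi> v)"] by blast
  interpret gh: module_hom s1 "(*) :: real \<Rightarrow> real \<Rightarrow> real" g
    using g(1) by (simp add: linear_iff_module_hom)
  define x where "x = (\<lambda>i. g (\<lambda>j. if j = i then 1 else 0))"
  have key: "g (\<phi> R) = t R" if R: "R \<in> S" for R
  proof -
    have "\<phi> R \<in> vs1.span B" using B(3) R by auto
    then obtain u where u: "\<phi> R = (\<Sum>v\<in>B. s1 (u v) v)"
      using vs1.span_finite[of B] fS0 BS0 by auto
    have u2: "\<phi> R = (\<Sum>R'\<in>S0. s1 (u (\<phi> R')) (\<phi> R'))"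
      using u BS0 sum.reindex[OF injS0] by (simp add: comp_def)
    define c where "c = (\<lambda>R'. (if R' \<in> S0 then u (\<phi> R') else 0) - (if R' = R then 1 else 0))"
    have S0S: "S0 \<subseteq> S" using S0_def by auto
    have "\<forall>i. (\<Sum>R'\<in>S. c R' * of_int (R' i)) = 0"
    proof
      fix i
      have "(\<Sum>R'\<in>S. c R' * of_int (R' i)) =
            (\<Sum>R'\<in>S. (if R' \<in> S0 then u (\<phi> R') * of_int (R' i) else 0)) -
            (\<Sum>R'\<in>S. (if R' = R then of_int (R' i) else 0))"
        unfolding c_def sum_subtractf[symmetric] by (intro sum.cong) (auto simp: left_diff_distrib)
      also have "\<dots> = (\<Sum>R'\<in>S0. u (\<phi> R') * of_int (R' i)) - of_int (R i)"
        using R fS S0S by (simp add: sum.If_cases Int_absorb1)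
      also have "\<dots> = 0"
        using fun_cong[OF u2, of i] by (simp add: sum_fun_apply s1_def \<phi>_def)
      finally show "(\<Sum>R'\<in>S. c R' * of_int (R' i)) = 0" .
    qed
    from cyc[OF this] have "(\<Sum>R'\<in>S. c R' * t R') = 0" .
    moreover have "(\<Sum>R'\<in>S. c R' * t R') = (\<Sum>R'\<in>S0. u (\<phi> R') * t R') - t R"
    proof -
      have "(\<Sum>R'\<in>S. c R' * t R') =
            (\<Sum>R'\<in>S. (if R' \<in> S0 then u (\<phi> R') * t R' else 0)) -
            (\<Sum>R'\<in>S. (if R' = R then t R' else 0))"
        unfolding c_def sum_subtractf[symmetric] by (intro sum.cong) (auto simp: left_diff_distrib)
      also have "\<dots> = (\<Sum>R'\<in>S0. u (\<phi> R') * t R') - t R"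
        using R fS S0S by (simp add: sum.If_cases Int_absorb1)
      finally show ?thesis .
    qed
    moreover have "g (\<phi> R) = (\<Sum>R'\<in>S0. u (\<phi> R') * t R')"
    proof -
      have "g (\<phi> R) = (\<Sum>R'\<in>S0. u (\<phi> R') * g (\<phi> R'))"
        unfolding u2 gh.sum by (simp add: gh.scale)
      also have "\<dots> = (\<Sum>R'\<in>S0. u (\<phi> R') * t R')"
        using g(2) BS0 injphi by (intro sum.cong) (auto simp: inv_f_f)
      finally show ?thesis .
    qed
    ultimately show ?thesis by simp
  qed
  have "(\<Sum>i\<in>V. of_int (R i) * x i) = t R" if R: "R \<in> S" for R
  proof -
    have "\<phi> R = (\<Sum>i\<in>V. s1 (of_int (R i)) (\<lambda>j. if j = i then 1 else 0))"
    proof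
      fix j
      have "(\<Sum>i\<in>V. s1 (of_int (R i)) (\<lambda>j. if j = i then 1 else 0)) j = (\<Sum>i\<in>V. if i = j then of_int (R i) else 0)"
        by (simp add: sum_fun_apply s1_def if_distrib eq_commute cong: if_cong)
      also have "\<dots> = \<phi> R j" using supp R fV by (auto simp: \<phi>_def)
      finally show "\<phi> R j = (\<Sum>i\<in>V. s1 (of_int (R i)) (\<lambda>j. if j = i then 1 else 0)) j" by simp
    qed
    then have "g (\<phi> R) = (\<Sum>i\<in>V. of_int (R i) * x i)"
      by (simp add: gh.sum gh.scale x_def)
    then show ?thesis using key R by simp
  qed
  then show ?thesis by blast
qed

lemma rneg_rneg[simp]: "rneg (rneg R) = R" by (simp add: rneg_def)

lemma rneg_neq: "R \<noteq> (\<lambda>_. 0) \<Longrightarrow> rneg R \<noteq> R"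
  by (auto simp: rneg_def fun_eq_iff)

lemma reps_props:
  assumes cl: "\<forall>R\<in>\<R>. rneg R \<in> \<R> \<and> R \<noteq> (\<lambda>_. 0)"
  shows "reps \<R> \<subseteq> \<R> \<and> (\<forall>R\<in>\<R>. (R \<in> reps \<R>) \<noteq> (rneg R \<in> reps \<R>))"
proof -
  define ch where "ch R = (SOME x. x \<in> {R, rneg R})" for R :: "'a reaction"
  have ch_in: "ch R \<in> {R, rneg R}" for R unfolding ch_def by (rule someI[where x=R]) simp
  have ch_sym: "ch (rneg R) = ch R" for R
  proof -
    have "{rneg R, rneg (rneg R)} = {R, rneg R}" by auto
    then show ?thesis unfolding ch_def by simp
  qed
  define S0 where "S0 = {R\<in>\<R>. ch R = R}"
  have "S0 \<subseteq> \<R> \<and> (\<forall>R\<in>\<R>. (R \<in> S0) \<noteq> (rneg R \<in> S0))"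
  proof (intro conjI ballI)
    show "S0 \<subseteq> \<R>" by (auto simp: S0_def)
  next
    fix R assume R: "R \<in> \<R>"
    have ne: "rneg R \<noteq> R" using cl R rneg_neq by blast
    show "(R \<in> S0) \<noteq> (rneg R \<in> S0)"
      using ch_in[of R] ch_sym[of R] ne R cl unfolding S0_def by auto
  qed
  then have ex: "\<exists>S. S \<subseteq> \<R> \<and> (\<forall>R\<in>\<R>. (R \<in> S) \<noteq> (rneg R \<in> S))" by blast
  show ?thesis unfolding reps_def by (rule someI_ex[OF ex])
qed

lemma split_sum:
  assumes "finite A"
  shows "(\<Sum>i\<in>A \<inter> Ireact R. of_int (R i) * y i) + (\<Sum>i\<in>A \<inter> Freact R. of_int (R i) * y i)
         = (\<Sum>i\<in>A. of_int (R i) * (y i :: real))"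
proof -
  have e1: "A \<inter> Ireact R = {i\<in>A. R i < 0}" "A \<inter> Freact R = {i\<in>A. R i > 0}"
    by (auto simp: Ireact_def Freact_def)
  show ?thesis unfolding e1 sum.inter_filter[OF assms] sum.distrib[symmetric]
    by (intro sum.cong) auto
qed

lemma pow_exp: "k \<ge> 0 \<Longrightarrow> exp (y::real) ^ nat k = exp (of_int k * y)"
proof -
  assume k: "k \<ge> 0"
  have "exp y ^ nat k = exp (of_nat (nat k) * y)" by (rule exp_of_nat_mult[symmetric])
  also have "(of_nat (nat k) :: real) = of_int k" using k by simp
  finally show ?thesis .
qed

lemma per_term:
  fixes E n :: "'s \<Rightarrow> real" and K :: "'s reaction \<Rightarrow> real"
  assumes fO: "finite \<Omega>" and U: "U \<subseteq> \<Omega>" and V: "V = \<Omega> - U"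
    and supp: "\<forall>i. i \<notin> \<Omega> \<longrightarrow> Rb i = 0"
    and hn: "\<forall>s\<in>U. Rb s \<noteq> 0 \<longrightarrow> n s = exp (- E s)"
    and hK: "K (rneg Rb) = K Rb * exp (\<Sum>i\<in>\<Omega>. of_int (Rb i) * E i)"
  shows "K (rneg Rb) * (\<Prod>s\<in>U \<inter> Ireact (rneg Rb). n s ^ nat (- rneg Rb s))
       = K Rb * (\<Prod>s\<in>U \<inter> Ireact Rb. n s ^ nat (- Rb s)) * exp (\<Sum>i\<in>V. of_int (Rb i) * E i)"
proof -
  have fU: "finite U" using fO U finite_subset by blast
  have e1: "U \<inter> Ireact (rneg Rb) = U \<inter> Freact Rb" by (auto simp: Ireact_def Freact_def rneg_def)
  have P1: "(\<Prod>s\<in>U \<inter> Ireact (rneg Rb). n s ^ nat (- rneg Rb s))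
        = exp (- (\<Sum>s\<in>U \<inter> Freact Rb. of_int (Rb s) * E s))"
  proof -
    have "(\<Prod>s\<in>U \<inter> Freact Rb. n s ^ nat (- rneg Rb s)) = (\<Prod>s\<in>U \<inter> Freact Rb. exp (- (of_int (Rb s) * E s)))"
    proof (intro prod.cong refl)
      fix s assume s: "s \<in> U \<inter> Freact Rb"
      then have "Rb s > 0" "n s = exp (- E s)" using hn by (auto simp: Freact_def)
      then show "n s ^ nat (- rneg Rb s) = exp (- (of_int (Rb s) * E s))"
        by (simp add: rneg_def pow_exp)
    qed
    also have "\<dots> = exp (- (\<Sum>s\<in>U \<inter> Freact Rb. of_int (Rb s) * E s))"
      unfolding sum_negf[symmetric] using fU by (intro exp_sum[symmetric]) simp
    finally show ?thesis using e1 by simp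
  qed
  have P2: "(\<Prod>s\<in>U \<inter> Ireact Rb. n s ^ nat (- Rb s))
        = exp (\<Sum>s\<in>U \<inter> Ireact Rb. of_int (Rb s) * E s)"
  proof -
    have "(\<Prod>s\<in>U \<inter> Ireact Rb. n s ^ nat (- Rb s)) = (\<Prod>s\<in>U \<inter> Ireact Rb. exp (of_int (Rb s) * E s))"
    proof (intro prod.cong refl)
      fix s assume s: "s \<in> U \<inter> Ireact Rb"
      then have "Rb s < 0" "n s = exp (- E s)" using hn by (auto simp: Ireact_def)
      then show "n s ^ nat (- Rb s) = exp (of_int (Rb s) * E s)"
        by (simp add: pow_exp)
    qed
    also have "\<dots> = exp (\<Sum>s\<in>U \<inter> Ireact Rb. of_int (Rb s) * E s)"
      using fU by (simp add: exp_sum)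
    finally show ?thesis .
  qed
  have OUV: "(\<Sum>i\<in>\<Omega>. of_int (Rb i) * E i) = (\<Sum>i\<in>U. of_int (Rb i) * E i) + (\<Sum>i\<in>V. of_int (Rb i) * E i)"
  proof -
    have "\<Omega> = U \<union> V" "U \<inter> V = {}" using U V by auto
    moreover have "finite V" using V fO by auto
    ultimately show ?thesis using fU by (simp add: sum.union_disjoint)
  qed
  define a where "a = (\<Sum>s\<in>U \<inter> Ireact Rb. of_int (Rb s) * E s)"
  define b where "b = (\<Sum>s\<in>U \<inter> Freact Rb. of_int (Rb s) * E s)"
  define cU where "cU = (\<Sum>i\<in>U. of_int (Rb i) * E i)"
  define cV where "cV = (\<Sum>i\<in>V. of_int (Rb i) * E i)"
  have ab: "a + b = cU" unfolding a_def b_def cU_def by (rule split_sum[OF fU])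
  have "K Rb * exp (cU + cV) * exp (- b) = K Rb * exp (cU + cV + - b)"
    by (simp only: exp_add mult.assoc)
  also have "cU + cV + - b = a + cV" using ab by linarith
  also have "K Rb * exp (a + cV) = K Rb * exp a * exp cV" by (simp add: exp_add mult.assoc)
  finally show ?thesis unfolding P1 P2 hK OUV a_def[symmetric] b_def[symmetric] cU_def[symmetric] cV_def[symmetric] .
qed


lemma rneg_proj: "rneg (proj V Rb) = proj V (rneg Rb)"
  by (auto simp: rneg_def proj_def fun_eq_iff)

lemma general:
  fixes \<Omega> U V :: "'s set" and \<R> :: "'s reaction set" and K :: "'s reaction \<Rightarrow> real"
    and n E :: "'s \<Rightarrow> real"
  assumes ks: "kinetic_system \<Omega> \<R> K"
    and U: "U \<subseteq> \<Omega>"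
    and V: "V = \<Omega> - U"
    and npos: "\<forall>s\<in>U. n s > 0"
    and expo: "\<forall>Rb\<in>\<R>. K (rneg Rb) = K Rb * exp (\<Sum>i\<in>\<Omega>. of_int (Rb i) * E i)"
    and H: "\<forall>s\<in>U \<inter> Dcyc \<Omega> V \<R>. n s = exp (- E s)"
  shows "detailed_balance V (reduced_reactions V \<R>) (reduced_rates U V \<R> K n)"
proof -
  define RV where "RV = reduced_reactions V \<R>"
  define K' where "K' = reduced_rates U V \<R> K n"
  have fO: "finite \<Omega>" and fR: "finite \<R>" and Rnz: "\<forall>R\<in>\<R>. R \<noteq> (\<lambda>_. 0)"
    and Rsupp: "\<forall>R\<in>\<R>. \<forall>i. i \<notin> \<Omega> \<longrightarrow> R i = 0"
    and bid: "\<forall>R\<in>\<R>. rneg R \<in> \<R>" and Kpos: "\<forall>R\<in>\<R>. K R > 0"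
    using ks by (auto simp: kinetic_system_def chemical_network_def bidirectional_def)
  have fV: "finite V" using fO V by auto
  have fU: "finite U" using fO U finite_subset by blast
  have RV_supp: "\<forall>R\<in>RV. \<forall>i. i \<notin> V \<longrightarrow> R i = 0"
    by (auto simp: RV_def reduced_reactions_def proj_def)
  have RV_cl: "\<forall>R\<in>RV. rneg R \<in> RV \<and> R \<noteq> (\<lambda>_. 0)"
  proof
    fix R assume "R \<in> RV"
    then obtain Rb where Rb: "Rb \<in> \<R>" "R = proj V Rb" "proj V Rb \<noteq> (\<lambda>_. 0)"
      by (auto simp: RV_def reduced_reactions_def)
    have "rneg R = proj V (rneg Rb)" using Rb rneg_proj by metis
    moreover have "proj V (rneg Rb) \<noteq> (\<lambda>_. 0)" using Rb(3)
      by (auto simp: proj_def rneg_def fun_eq_iff split: if_splits)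
    moreover have "rneg Rb \<in> \<R>" using bid Rb by auto
    ultimately have "rneg R \<in> RV" unfolding RV_def reduced_reactions_def by blast
    then show "rneg R \<in> RV \<and> R \<noteq> (\<lambda>_. 0)" using Rb by simp
  qed
  have fRV: "finite RV"
  proof -
    have "RV \<subseteq> proj V ` \<R>" by (auto simp: RV_def reduced_reactions_def)
    then show ?thesis using fR finite_subset by blast
  qed
  have reps: "reps RV \<subseteq> RV" "\<forall>R\<in>RV. (R \<in> reps RV) \<noteq> (rneg R \<in> reps RV)"
    using reps_props[OF RV_cl] by auto
  have fS: "finite (reps RV)" using reps fRV finite_subset by blast
  have K'pos: "K' R > 0" if R: "R \<in> RV" for R
  proof -
    obtain Rb where Rb: "Rb \<in> \<R>" "R = proj V Rb"
      using R by (auto simp: RV_def reduced_reactions_def)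
    have "K' R = (\<Sum>Rb\<in>{Rb\<in>\<R>. proj V Rb = R}. K Rb * (\<Prod>s\<in>U \<inter> Ireact Rb. n s ^ nat (- Rb s)))"
      by (simp add: K'_def reduced_rates_def)
    also have "\<dots> > 0"
    proof (rule sum_pos)
      show "finite {Rb\<in>\<R>. proj V Rb = R}" using fR by simp
      show "{Rb\<in>\<R>. proj V Rb = R} \<noteq> {}" using Rb by auto
      fix Rb' assume "Rb' \<in> {Rb\<in>\<R>. proj V Rb = R}"
      then have "K Rb' > 0" using Kpos by auto
      moreover have "(\<Prod>s\<in>U \<inter> Ireact Rb'. n s ^ nat (- Rb' s)) > 0"
        using npos by (intro prod_pos) auto
      ultimately show "K Rb' * (\<Prod>s\<in>U \<inter> Ireact Rb'. n s ^ nat (- Rb' s)) > 0" by simp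
    qed
    finally show ?thesis .
  qed
  have F4: "K' (rneg R) = K' R * exp (\<Sum>i\<in>V. of_int (R i) * E i)"
    if R: "R \<in> reps RV" and c: "c \<in> cycles RV" "c R \<noteq> 0" for R c
  proof -
    define A where "A = {Rb\<in>\<R>. proj V Rb = R}"
    have hn: "\<forall>s\<in>U. Rb s \<noteq> 0 \<longrightarrow> n s = exp (- E s)" if Rb: "Rb \<in> A" for Rb
    proof (intro ballI impI)
      fix s assume s: "s \<in> U" "Rb s \<noteq> 0"
      have "s \<in> Dcyc \<Omega> V \<R>"
        unfolding Dcyc_def using s U Rb c unfolding A_def RV_def by auto
      then show "n s = exp (- E s)" using H s by auto
    qed
    have eqA: "{Rb\<in>\<R>. proj V Rb = rneg R} = rneg ` A"
    proof
      show "{Rb\<in>\<R>. proj V Rb = rneg R} \<subseteq> rneg ` A"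
      proof
        fix Rb assume "Rb \<in> {Rb\<in>\<R>. proj V Rb = rneg R}"
        then have "rneg Rb \<in> A" "Rb = rneg (rneg Rb)" using bid rneg_proj[of V Rb]
          by (auto simp: A_def)
        then show "Rb \<in> rneg ` A" by blast
      qed
      show "rneg ` A \<subseteq> {Rb\<in>\<R>. proj V Rb = rneg R}"
        using bid rneg_proj[symmetric] by (auto simp: A_def)
    qed
    have inj: "inj_on rneg A" by (metis inj_on_inverseI rneg_rneg)
    have "K' (rneg R) = (\<Sum>Rb\<in>rneg ` A. K Rb * (\<Prod>s\<in>U \<inter> Ireact Rb. n s ^ nat (- Rb s)))"
      by (simp add: K'_def reduced_rates_def eqA)
    also have "\<dots> = (\<Sum>Rb\<in>A. K (rneg Rb) * (\<Prod>s\<in>U \<inter> Ireact (rneg Rb). n s ^ nat (- rneg Rb s)))"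
      by (simp add: sum.reindex[OF inj])
    also have "\<dots> = (\<Sum>Rb\<in>A. K Rb * (\<Prod>s\<in>U \<inter> Ireact Rb. n s ^ nat (- Rb s)) * exp (\<Sum>i\<in>V. of_int (R i) * E i))"
    proof (rule sum.cong[OF refl])
      fix Rb assume Rb: "Rb \<in> A"
      have RbR: "Rb \<in> \<R>" and pr: "proj V Rb = R" using Rb by (auto simp: A_def)
      have "(\<Sum>i\<in>V. of_int (Rb i) * E i) = (\<Sum>i\<in>V. of_int (R i) * E i)"
        using pr by (auto simp: proj_def)
      then show "K (rneg Rb) * (\<Prod>s\<in>U \<inter> Ireact (rneg Rb). n s ^ nat (- rneg Rb s)) =
          K Rb * (\<Prod>s\<in>U \<inter> Ireact Rb. n s ^ nat (- Rb s)) * exp (\<Sum>i\<in>V. of_int (R i) * E i)"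
        using per_term[OF fO U V, of Rb n E K] Rsupp RbR hn[OF Rb] expo by auto
    qed
    also have "\<dots> = K' R * exp (\<Sum>i\<in>V. of_int (R i) * E i)"
      by (simp add: K'_def reduced_rates_def A_def sum_distrib_right)
    finally show ?thesis .
  qed
  define t where "t R = ln (K' R / K' (rneg R))" for R
  have cyc: "(\<Sum>R\<in>reps RV. c R * t R) = 0"
    if c: "\<forall>i. (\<Sum>R\<in>reps RV. c R * of_int (R i)) = 0" for c
  proof -
    define c' where "c' R = (if R \<in> reps RV then c R else 0)" for R
    have c'cyc: "c' \<in> cycles RV"
      unfolding cycles_def using c by (simp add: c'_def)
    have "(\<Sum>R\<in>reps RV. c R * t R) = (\<Sum>R\<in>reps RV. c R * (- (\<Sum>i\<in>V. of_int (R i) * E i)))"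
    proof (rule sum.cong[OF refl])
      fix R assume R: "R \<in> reps RV"
      show "c R * t R = c R * (- (\<Sum>i\<in>V. of_int (R i) * E i))"
      proof (cases "c R = 0")
        case False
        then have "c' R \<noteq> 0" using R by (simp add: c'_def)
        from F4[OF R c'cyc this] have e: "K' (rneg R) = K' R * exp (\<Sum>i\<in>V. of_int (R i) * E i)" .
        have "K' R > 0" using K'pos R reps by auto
        then have "t R = - (\<Sum>i\<in>V. of_int (R i) * E i)"
          unfolding t_def e by (simp add: ln_div)
        then show ?thesis by simp
      qed simp
    qed
    also have "\<dots> = - (\<Sum>i\<in>V. E i * (\<Sum>R\<in>reps RV. c R * of_int (R i)))"
      by (simp add: sum_distrib_left sum_negf algebra_simps sum.swap[of _ V])
    also have "\<dots> = 0" using c by simp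
    finally show ?thesis .
  qed
  obtain x where x: "\<forall>R\<in>reps RV. (\<Sum>i\<in>V. of_int (R i) * x i) = t R"
    using LA[OF fS fV _ cyc] RV_supp reps by blast
  define Nb where "Nb i = exp (x i)" for i
  have "(\<forall>i\<in>V. Nb i > 0) \<and> (\<forall>R\<in>reps RV.
           K' R * (\<Prod>i\<in>Ireact R. Nb i ^ nat (- R i)) =
           K' (rneg R) * (\<Prod>i\<in>Freact R. Nb i ^ nat (R i)))"
  proof (intro conjI ballI)
    show "Nb i > 0" for i by (simp add: Nb_def)
    fix R assume R: "R \<in> reps RV"
    have RRV: "R \<in> RV" "rneg R \<in> RV" using R reps RV_cl by auto
    have p1: "K' R > 0" "K' (rneg R) > 0" using K'pos RRV by auto
    have eI: "Ireact R = V \<inter> Ireact R" "Freact R = V \<inter> Freact R"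
      using RV_supp RRV(1) by (auto simp: Ireact_def Freact_def) (metis less_irrefl)+
    define a where "a = (\<Sum>i\<in>V \<inter> Ireact R. of_int (R i) * x i)"
    define b where "b = (\<Sum>i\<in>V \<inter> Freact R. of_int (R i) * x i)"
    have ab: "a + b = ln (K' R / K' (rneg R))"
      using split_sum[OF fV, of R x] x R unfolding a_def b_def t_def by simp
    have PI: "(\<Prod>i\<in>Ireact R. Nb i ^ nat (- R i)) = exp (- a)"
    proof -
      have "(\<Prod>i\<in>V \<inter> Ireact R. Nb i ^ nat (- R i)) = (\<Prod>i\<in>V \<inter> Ireact R. exp (- (of_int (R i) * x i)))"
        by (intro prod.cong refl) (auto simp: Nb_def Ireact_def pow_exp)
      also have "\<dots> = exp (- a)"
        unfolding a_def sum_negf[symmetric] using fV by (intro exp_sum[symmetric]) simp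
      finally show ?thesis using eI by simp
    qed
    have PF: "(\<Prod>i\<in>Freact R. Nb i ^ nat (R i)) = exp b"
    proof -
      have "(\<Prod>i\<in>V \<inter> Freact R. Nb i ^ nat (R i)) = (\<Prod>i\<in>V \<inter> Freact R. exp (of_int (R i) * x i))"
        by (intro prod.cong refl) (auto simp: Nb_def Freact_def pow_exp)
      also have "\<dots> = exp b"
        unfolding b_def using fV by (intro exp_sum[symmetric]) simp
      finally show ?thesis using eI by simp
    qed
    have "exp (a + b) = K' R / K' (rneg R)" using ab p1 by simp
    then have "K' R = K' (rneg R) * exp a * exp b" using p1
      by (simp add: exp_add field_simps)
    then have "K' R * exp (- a) = K' (rneg R) * exp b"
      by (simp add: exp_minus field_simps)
    then show "K' R * (\<Prod>i\<in>Ireact R. Nb i ^ nat (- R i)) =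
           K' (rneg R) * (\<Prod>i\<in>Freact R. Nb i ^ nat (R i))" using PI PF by simp
  qed
  then show ?thesis unfolding detailed_balance_def RV_def[symmetric] K'_def[symmetric] by blast
qed


lemma expo_all:
  fixes K :: "'s reaction \<Rightarrow> real" and E :: "'s \<Rightarrow> real"
  assumes ks: "kinetic_system \<Omega> \<R> K"
    and er: "\<forall>R\<in>reps \<R>. K (rneg R) = K R * exp (\<Sum>i\<in>\<Omega>. of_int (R i) * E i)"
  shows "\<forall>Rb\<in>\<R>. K (rneg Rb) = K Rb * exp (\<Sum>i\<in>\<Omega>. of_int (Rb i) * E i)"
proof
  have Rnz: "\<forall>R\<in>\<R>. rneg R \<in> \<R> \<and> R \<noteq> (\<lambda>_. 0)" and Kpos: "\<forall>R\<in>\<R>. K R > 0"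
    using ks by (auto simp: kinetic_system_def chemical_network_def bidirectional_def)
  note rp = reps_props[OF Rnz]
  fix Rb assume Rb: "Rb \<in> \<R>"
  show "K (rneg Rb) = K Rb * exp (\<Sum>i\<in>\<Omega>. of_int (Rb i) * E i)"
  proof (cases "Rb \<in> reps \<R>")
    case True then show ?thesis using er by auto
  next
    case False
    then have "rneg Rb \<in> reps \<R>" using rp Rb by auto
    then have "K Rb = K (rneg Rb) * exp (\<Sum>i\<in>\<Omega>. of_int (rneg Rb i) * E i)"
      using er by fastforce
    also have "(\<Sum>i\<in>\<Omega>. of_int (rneg Rb i) * E i) = - (\<Sum>i\<in>\<Omega>. of_int (Rb i) * E i)"
      by (simp add: rneg_def sum_negf[symmetric])
    finally have "K Rb = K (rneg Rb) * exp (- (\<Sum>i\<in>\<Omega>. of_int (Rb i) * E i))" .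
    then show ?thesis by (simp add: exp_minus field_simps)
  qed
qed

lemma energy_expo:
  assumes ks: "kinetic_system \<Omega> \<R> K" and en: "energy \<Omega> \<R> K E"
  shows "\<forall>R\<in>reps \<R>. K (rneg R) = K R * exp (\<Sum>i\<in>\<Omega>. of_int (R i) * E i)"
proof
  have Rnz: "\<forall>R\<in>\<R>. rneg R \<in> \<R> \<and> R \<noteq> (\<lambda>_. 0)" and Kpos: "\<forall>R\<in>\<R>. K R > 0"
    using ks by (auto simp: kinetic_system_def chemical_network_def bidirectional_def)
  note rp = reps_props[OF Rnz]
  fix R assume R: "R \<in> reps \<R>"
  then have p: "K R > 0" "K (rneg R) > 0" using rp Rnz Kpos by auto
  have "ln (K (rneg R) / K R) = (\<Sum>i\<in>\<Omega>. of_int (R i) * E i)" using en R by (simp add: energy_def)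
  then have "K (rneg R) / K R = exp (\<Sum>i\<in>\<Omega>. of_int (R i) * E i)" using p
    by (metis divide_pos_pos exp_ln)
  then show "K (rneg R) = K R * exp (\<Sum>i\<in>\<Omega>. of_int (R i) * E i)" using p by (simp add: field_simps)
qed

lemma db_expo:
  assumes ks: "kinetic_system \<Omega> \<R> K" and db: "detailed_balance \<Omega> \<R> K"
  obtains E :: "'s \<Rightarrow> real" where "\<forall>R\<in>reps \<R>. K (rneg R) = K R * exp (\<Sum>i\<in>\<Omega>. of_int (R i) * E i)"
proof -
  have Rnz: "\<forall>R\<in>\<R>. rneg R \<in> \<R> \<and> R \<noteq> (\<lambda>_. 0)" and Kpos: "\<forall>R\<in>\<R>. K R > 0"
    and fO: "finite \<Omega>" and Rsupp: "\<forall>R\<in>\<R>. \<forall>i. i \<notin> \<Omega> \<longrightarrow> R i = 0"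
    using ks by (auto simp: kinetic_system_def chemical_network_def bidirectional_def)
  note rp = reps_props[OF Rnz]
  obtain Nb where Nb: "\<forall>i\<in>\<Omega>. Nb i > 0" and eq: "\<forall>R\<in>reps \<R>.
           K R * (\<Prod>i\<in>Ireact R. Nb i ^ nat (- R i)) =
           K (rneg R) * (\<Prod>i\<in>Freact R. Nb i ^ nat (R i))"
    using db by (auto simp: detailed_balance_def)
  define E where "E i = - ln (Nb i)" for i
  have NbE: "Nb i = exp (- E i)" if "i \<in> \<Omega>" for i using Nb that by (simp add: E_def)
  have "\<forall>R\<in>reps \<R>. K (rneg R) = K R * exp (\<Sum>i\<in>\<Omega>. of_int (R i) * E i)"
  proof
    fix R assume R: "R \<in> reps \<R>"
    then have RR: "R \<in> \<R>" using rp by auto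
    then have p: "K R > 0" "K (rneg R) > 0" using Rnz Kpos by auto
    have eI: "Ireact R = \<Omega> \<inter> Ireact R" "Freact R = \<Omega> \<inter> Freact R"
      using Rsupp RR by (auto simp: Ireact_def Freact_def) (metis less_irrefl)+
    define a where "a = (\<Sum>i\<in>\<Omega> \<inter> Ireact R. of_int (R i) * E i)"
    define b where "b = (\<Sum>i\<in>\<Omega> \<inter> Freact R. of_int (R i) * E i)"
    have ab: "a + b = (\<Sum>i\<in>\<Omega>. of_int (R i) * E i)"
      using split_sum[OF fO, of R E] unfolding a_def b_def by simp
    have PI: "(\<Prod>i\<in>Ireact R. Nb i ^ nat (- R i)) = exp a"
    proof -
      have "(\<Prod>i\<in>\<Omega> \<inter> Ireact R. Nb i ^ nat (- R i)) = (\<Prod>i\<in>\<Omega> \<inter> Ireact R. exp (of_int (R i) * E i))"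
        by (intro prod.cong refl) (auto simp: NbE Ireact_def pow_exp)
      also have "\<dots> = exp a"
        unfolding a_def using fO by (intro exp_sum[symmetric]) simp
      finally show ?thesis using eI by simp
    qed
    have PF: "(\<Prod>i\<in>Freact R. Nb i ^ nat (R i)) = exp (- b)"
    proof -
      have "(\<Prod>i\<in>\<Omega> \<inter> Freact R. Nb i ^ nat (R i)) = (\<Prod>i\<in>\<Omega> \<inter> Freact R. exp (- (of_int (R i) * E i)))"
        by (intro prod.cong refl) (auto simp: NbE Freact_def pow_exp)
      also have "\<dots> = exp (- b)"
        unfolding b_def sum_negf[symmetric] using fO by (intro exp_sum[symmetric]) simp
      finally show ?thesis using eI by simp
    qed
    have "K R * exp a = K (rneg R) * exp (- b)" using eq R unfolding PI[symmetric] PF[symmetric] by blast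
    then have "K (rneg R) = K R * exp a * exp b" by (simp add: exp_minus field_simps)
    then show "K (rneg R) = K R * exp (\<Sum>i\<in>\<Omega>. of_int (R i) * E i)"
      unfolding ab[symmetric] by (simp add: exp_add mult.assoc)
  qed
  then show ?thesis using that by blast
qed

theorem proposition5p1:
  fixes \<Omega> U V :: "'s set" and \<R> :: "'s reaction set" and K :: "'s reaction \<Rightarrow> real"
    and n :: "'s \<Rightarrow> real"
  assumes ks: "kinetic_system \<Omega> \<R> K"
    and db: "detailed_balance \<Omega> \<R> K"
    and U: "U \<subseteq> \<Omega>" "U \<noteq> {}"
    and V: "V = \<Omega> - U"
    and npos: "\<forall>s\<in>U. n s > 0"
  shows "(U \<inter> Dcyc \<Omega> V \<R> = {} \<longrightarrow>
            detailed_balance V (reduced_reactions V \<R>) (reduced_rates U V \<R> K n))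
       \<and> (\<forall>E. U \<inter> Dcyc \<Omega> V \<R> \<noteq> {} \<and> energy \<Omega> \<R> K E
              \<and> (\<forall>s\<in>U \<inter> Dcyc \<Omega> V \<R>. n s = exp (- E s)) \<longrightarrow>
            detailed_balance V (reduced_reactions V \<R>) (reduced_rates U V \<R> K n))"
proof (intro conjI impI allI)
  assume e: "U \<inter> Dcyc \<Omega> V \<R> = {}"
  obtain E :: "'s \<Rightarrow> real" where E: "\<forall>R\<in>reps \<R>. K (rneg R) = K R * exp (\<Sum>i\<in>\<Omega>. of_int (R i) * E i)"
    using db_expo[OF ks db] by blast
  show "detailed_balance V (reduced_reactions V \<R>) (reduced_rates U V \<R> K n)"
    by (rule general[OF ks U(1) V npos expo_all[OF ks E]]) (use e in auto)
next
  fix E assume a: "U \<inter> Dcyc \<Omega> V \<R> \<noteq> {} \<and> energy \<Omega> \<R> K E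
              \<and> (\<forall>s\<in>U \<inter> Dcyc \<Omega> V \<R>. n s = exp (- E s))"
  show "detailed_balance V (reduced_reactions V \<R>) (reduced_rates U V \<R> K n)"
    by (rule general[OF ks U(1) V npos expo_all[OF ks energy_expo[OF ks]]]) (use a in auto)
qed

end
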